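(* Let $G$ be a finite graph that admits a distinguishing edge coloring and has a non-identity automorphism. Then $$\theta'(G)=\max\{\,|\alpha|_e \;:\; \alpha\in\mathrm{Aut}(G)\setminus\{\mathrm{id}\}\,\}+1.$$
   Context: All graphs are finite and simple. An automorphism $\alpha$ of $G$ acts on edges by $\alpha(uv)=\alpha(u)\alpha(v)$. $|\alpha|_e$ denotes the number of cycles, including cycles of length 1 (fixed edges), in the cycle decomposition of the permutation that $\alpha$ induces on $E(G)$. An edge coloring with $k$ colors is a surjective map $c:E(G)\to\{1,\dots,k\}$. It is distinguishing if the only automorphism preserving all edge colors is the identity. $\theta'(G)$ is the least integer $k$ such that every edge coloring of $G$ using exactly $k$ colors is distinguishing. *)

theory Defs
  imports "HOL-Combinatorics.Permutations"
begin

definition simple_graph :: "'a set \<Rightarrow> 'a set set \<Rightarrow> bool" where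
  "simple_graph V E \<longleftrightarrow> finite V \<and>
     (\<forall>e\<in>E. \<exists>u v. u \<noteq> v \<and> u \<in> V \<and> v \<in> V \<and> e = {u, v})"

definition graph_aut :: "'a set \<Rightarrow> 'a set set \<Rightarrow> ('a \<Rightarrow> 'a) \<Rightarrow> bool" where
  "graph_aut V E f \<longleftrightarrow> f permutes V \<and>
     (\<forall>u\<in>V. \<forall>v\<in>V. {u, v} \<in> E \<longleftrightarrow> {f u, f v} \<in> E)"

definition edge_map :: "('a \<Rightarrow> 'a) \<Rightarrow> 'a set \<Rightarrow> 'a set" where
  "edge_map f e = f ` e"

definition num_cycles :: "('b \<Rightarrow> 'b) \<Rightarrow> 'b set \<Rightarrow> nat" where
  "num_cycles s S = card ((\<lambda>x. {(s ^^ n) x | n. True}) ` S)"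

definition edge_cycles :: "'a set set \<Rightarrow> ('a \<Rightarrow> 'a) \<Rightarrow> nat" where
  "edge_cycles E f = num_cycles (edge_map f) E"

definition edge_coloring :: "'a set set \<Rightarrow> nat \<Rightarrow> ('a set \<Rightarrow> nat) \<Rightarrow> bool" where
  "edge_coloring E k c \<longleftrightarrow> c ` E = {1..k}"

definition distinguishing :: "'a set \<Rightarrow> 'a set set \<Rightarrow> ('a set \<Rightarrow> nat) \<Rightarrow> bool" where
  "distinguishing V E c \<longleftrightarrow>
     (\<forall>f. graph_aut V E f \<and> (\<forall>e\<in>E. c (edge_map f e) = c e) \<longrightarrow> f = id)"

definition has_distinguishing_edge_coloring :: "'a set \<Rightarrow> 'a set set \<Rightarrow> bool" where
  "has_distinguishing_edge_coloring V E \<longleftrightarrow>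
     (\<exists>k c. edge_coloring E k c \<and> distinguishing V E c)"

definition theta' :: "'a set \<Rightarrow> 'a set set \<Rightarrow> nat" where
  "theta' V E = (LEAST k. 1 \<le> k \<and>
     (\<forall>c. edge_coloring E k c \<longrightarrow> distinguishing V E c))"

end

theory Submission
  imports Defs "HOL-Combinatorics.Cycles"
begin

lemma aut_edge_in:
  assumes "simple_graph V E" "graph_aut V E f" "e \<in> E"
  shows "edge_map f e \<in> E"
proof -
  obtain u v where "u \<in> V" "v \<in> V" "e = {u,v}" using assms unfolding simple_graph_def by blast
  thus ?thesis using assms(2,3) unfolding graph_aut_def edge_map_def by auto
qed

lemma edge_map_pow: "(edge_map f ^^ n) e = (f ^^ n) ` e"
  by (induction n arbitrary: e) (auto simp: edge_map_def image_comp)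


lemma pow_in:
  assumes "simple_graph V E" "graph_aut V E f" "e \<in> E"
  shows "(edge_map f ^^ n) e \<in> E"
proof (induction n)
  case 0 then show ?case using assms(3) by simp
next
  case (Suc n) then show ?case using aut_edge_in[OF assms(1,2)] by simp
qed


lemma col_const:
  assumes pres: "\<forall>e\<in>E. c (edge_map f e) = c e" and G: "simple_graph V E" and f: "graph_aut V E f" and e: "e \<in> E"
  shows "c ((edge_map f ^^ n) e) = c e"
proof (induction n)
  case 0 then show ?case by simp
next
  case (Suc n)
  have m: "(edge_map f ^^ n) e \<in> E" using pow_in[OF G f e] .
  have "c ((edge_map f ^^ Suc n) e) = c (edge_map f ((edge_map f ^^ n) e))" by simp
  also have "\<dots> = c ((edge_map f ^^ n) e)" using pres m by blast
  finally show ?case using Suc.IH by simp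
qed

lemma finE: "simple_graph V E \<Longrightarrow> finite E"
proof -
  assume a: "simple_graph V E"
  hence "E \<subseteq> Pow V" unfolding simple_graph_def by fastforce
  moreover have "finite V" using a unfolding simple_graph_def by blast
  ultimately show ?thesis using finite_subset by blast
qed


lemma upper:
  assumes G: "simple_graph V E" and f: "graph_aut V E f" and cc: "edge_coloring E k c"
    and pres: "\<forall>e\<in>E. c (edge_map f e) = c e"
  shows "k \<le> edge_cycles E f"
proof -
  let ?O = "\<lambda>x. {(edge_map f ^^ n) x | n. True}"
  define h where "h X = c (SOME x. x \<in> X)" for X
  have hO: "h (?O e) = c e" if "e \<in> E" for e
  proof -
    have ex: "\<exists>x. x \<in> ?O e" by blast
    have "(SOME x. x \<in> ?O e) \<in> ?O e" using someI_ex[OF ex] .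
    then obtain n where "(SOME x. x \<in> ?O e) = (edge_map f ^^ n) e" by blast
    thus ?thesis unfolding h_def using col_const[OF pres G f that] by simp
  qed
  have eq: "c ` E = h ` (?O ` E)"
    using hO by (simp add: image_comp o_def cong: image_cong)
  have "card (c ` E) \<le> card (?O ` E)" unfolding eq by (rule card_image_le) (simp add: finE[OF G])
  moreover have "card (c ` E) = k" using cc unfolding edge_coloring_def by simp
  ultimately show ?thesis unfolding edge_cycles_def num_cycles_def by simp
qed
lemma orbit_eq:
  assumes G: "simple_graph V E" and f: "graph_aut V E f"
  shows "{(edge_map f ^^ n) (edge_map f e) | n. True} = {(edge_map f ^^ n) e | n. True}"
proof -
  have "permutation f" using f G unfolding graph_aut_def simple_graph_def permutation_permutes
    by blast
  then obtain N where N: "f ^^ N = id" "N > 0" by (rule permutation_is_nilpotent)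
  let ?s = "edge_map f"
  have sN: "(?s ^^ N) e = e" using N by (simp add: edge_map_pow)
  have A: "(?s ^^ n) (?s e) = (?s ^^ Suc n) e" for n by (simp add: funpow_swap1)
  have B: "(?s ^^ n) e = (?s ^^ (n + N - 1)) (?s e)" for n
  proof -
    have "(?s ^^ (n + N - 1)) (?s e) = (?s ^^ (n + N)) e" using A N(2)
      by (metis Suc_diff_1 add_gr_0)
    also have "\<dots> = (?s ^^ n) ((?s ^^ N) e)" by (simp add: funpow_add)
    finally show ?thesis using sN by simp
  qed
  show ?thesis
  proof
    show "{(?s ^^ n) (?s e) | n. True} \<subseteq> {(?s ^^ n) e | n. True}" using A by blast
    show "{(?s ^^ n) e | n. True} \<subseteq> {(?s ^^ n) (?s e) | n. True}" using B by blast
  qed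
qed

lemma lower:
  assumes G: "simple_graph V E" and f: "graph_aut V E f" and fid: "f \<noteq> id"
    and k: "1 \<le> k" "k \<le> edge_cycles E f"
  shows "\<exists>c. edge_coloring E k c \<and> \<not> distinguishing V E c"
proof -
  let ?O = "\<lambda>x. {(edge_map f ^^ n) x | n. True}"
  define S where "S = ?O ` E"
  have fS: "finite S" unfolding S_def using finE[OF G] by simp
  have cS: "card S = edge_cycles E f" unfolding S_def edge_cycles_def num_cycles_def by simp
  obtain b where b: "bij_betw b S {0..<card S}"
    using ex_bij_betw_finite_nat[OF fS] by (auto simp: atLeast0LessThan)
  define g where "g X = min (b X + 1) k" for X
  have "g ` S = {1..k}"
  proof
    show "g ` S \<subseteq> {1..k}" unfolding g_def using k by auto
    show "{1..k} \<subseteq> g ` S"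
    proof
      fix j assume j: "j \<in> {1..k}"
      hence "j - 1 \<in> {0..<card S}" using k cS by auto
      hence "j - 1 \<in> b ` S" using b unfolding bij_betw_def by simp
      then obtain X where X: "X \<in> S" "b X = j - 1" by (metis imageE)
      have "g X = j" unfolding g_def using X(2) j by auto
      thus "j \<in> g ` S" using X(1) by blast
    qed
  qed
  define c where "c e = g (?O e)" for e
  have col: "edge_coloring E k c" unfolding edge_coloring_def c_def
    using \<open>g ` S = {1..k}\<close> unfolding S_def by (simp add: image_comp o_def)
  have "\<forall>e\<in>E. c (edge_map f e) = c e" unfolding c_def using orbit_eq[OF G f] by simp
  hence "\<not> distinguishing V E c" using f fid unfolding distinguishing_def by blast
  thus ?thesis using col by blast
qed

theorem mainTheorem2:
  fixes V :: "'a set" and E :: "'a set set"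
  assumes "simple_graph V E"
    and "has_distinguishing_edge_coloring V E"
    and "\<exists>f. graph_aut V E f \<and> f \<noteq> id"
  shows "theta' V E = Max {edge_cycles E f | f. graph_aut V E f \<and> f \<noteq> id} + 1"
proof -
  let ?M = "{edge_cycles E f | f. graph_aut V E f \<and> f \<noteq> id}"
  have fin: "finite ?M"
  proof -
    have "?M \<subseteq> edge_cycles E ` {p. p permutes V}" unfolding graph_aut_def by blast
    moreover have "finite V" using assms(1) unfolding simple_graph_def by blast
    ultimately show ?thesis using finite_permutations finite_subset by blast
  qed
  have ne: "?M \<noteq> {}" using assms(3) by blast
  obtain f0 where f0: "graph_aut V E f0" "f0 \<noteq> id" "edge_cycles E f0 = Max ?M"
    using Max_in[OF fin ne] by auto
  have ub: "edge_cycles E f \<le> Max ?M" if "graph_aut V E f" "f \<noteq> id" for f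
    using Max_ge[OF fin] that by blast
  show ?thesis unfolding theta'_def
  proof (rule Least_equality)
    show "1 \<le> Max ?M + 1 \<and> (\<forall>c. edge_coloring E (Max ?M + 1) c \<longrightarrow> distinguishing V E c)"
    proof (intro conjI allI impI)
      fix c assume c: "edge_coloring E (Max ?M + 1) c"
      show "distinguishing V E c" unfolding distinguishing_def
      proof (intro allI impI)
        fix f assume h: "graph_aut V E f \<and> (\<forall>e\<in>E. c (edge_map f e) = c e)"
        show "f = id"
        proof (rule ccontr)
          assume "f \<noteq> id"
          hence "edge_cycles E f \<le> Max ?M" using ub h by blast
          moreover have "Max ?M + 1 \<le> edge_cycles E f" using upper[OF assms(1) _ c] h by blast
          ultimately show False by simp
        qed
      qed
    qed simp
  next
    fix y assume y: "1 \<le> y \<and> (\<forall>c. edge_coloring E y c \<longrightarrow> distinguishing V E c)"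
    show "Max ?M + 1 \<le> y"
    proof (rule ccontr)
      assume "\<not> Max ?M + 1 \<le> y"
      hence "y \<le> edge_cycles E f0" using f0 by simp
      then obtain c where "edge_coloring E y c" "\<not> distinguishing V E c"
        using lower[OF assms(1) f0(1,2)] y by blast
      thus False using y by blast
    qed
  qed
qed

end
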